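(* Let $G$ be an abelian group, $H$ a group and $\phi:G\to H$ a nontrivial group homomorphism, and let $F=G\cup\{0\}$ be a Massouros hyperfield with respect to $\phi$ (as defined in the context). Then $F$ has large sums, i.e. there is a nontrivial group homomorphism $f:G\to H'$ (to some group $H'$) such that for all $x,y,z\in G$, if $f(x)=f(y)\ne f(z)$ then $x+y+z=F$.
   Context: A hyperaddition on a nonempty set $H$ is a map $+:H\times H\to\mathcal P^*(H)$ (nonempty subsets of $H$) that is commutative and associative, where for subsets $A,B$ one sets $A+B=\bigcup_{a\in A,b\in B}(a+b)$ and an element $x$ is identified with $\{x\}$; thus $x+y+z=(x+y)+z$. A hypergroup is a set with a hyperaddition having a unique $0$ with $0+h=\{h\}$ for all $h$, such that for each $x$ there is a unique $y=:-x$ with $0\in x+y$, and such that $x\in y+z$ implies $z\in x+(-y)$. A hyperfield is a set $F$ with a hyperaddition and a multiplication such that $(F,+)$ is a hypergroup, $(F,\cdot)$ is a monoid, $a(b+c)=ab+ac$, $r\cdot 0=0$ for all $r$, and $F\setminus\{0\}$ is a multiplicative group. Massouros hyperfield: let $G$ be an abelian group written multiplicatively and $\phi:G\to H$ a group homomorphism with $|\phi(G)|\ge 3$. Let $F=G\cup\{0\}$, with multiplication that of $G$ extended by $0\cdot x=x\cdot 0=0$, and equipped with a hyperaddition making $F$ a hyperfield. $F$ is Massouros (with respect to $\phi$) if: (1) $\phi(-x)=\phi(x)$ for all $x\in G$; (2) for all $x,y\in G$ with $\phi(x)=\phi(y)$, $G\setminus\phi^{-1}(\phi(x))\subseteq x+y$;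 (3) for all $x,y\in G$ with $\phi(x)\ne\phi(y)$, $\phi^{-1}(\{\phi(x),\phi(y)\})\subseteq x+y$. *)

theory Defs
  imports "HOL-Algebra.Algebra"
begin

definition set_hadd :: "('a \<Rightarrow> 'a \<Rightarrow> 'a set) \<Rightarrow> 'a set \<Rightarrow> 'a set \<Rightarrow> 'a set" where
  "set_hadd hadd A B = (\<Union>a\<in>A. \<Union>b\<in>B. hadd a b)"

definition hyperaddition :: "'a set \<Rightarrow> ('a \<Rightarrow> 'a \<Rightarrow> 'a set) \<Rightarrow> bool" where
  "hyperaddition H hadd \<longleftrightarrow> H \<noteq> {} \<and>
     (\<forall>x\<in>H. \<forall>y\<in>H. hadd x y \<subseteq> H \<and> hadd x y \<noteq> {}) \<and>
     (\<forall>x\<in>H. \<forall>y\<in>H. hadd x y = hadd y x) \<and>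
     (\<forall>x\<in>H. \<forall>y\<in>H. \<forall>w\<in>H. set_hadd hadd (hadd x y) {w} = set_hadd hadd {x} (hadd y w))"

definition hneg :: "'a set \<Rightarrow> ('a \<Rightarrow> 'a \<Rightarrow> 'a set) \<Rightarrow> 'a \<Rightarrow> 'a \<Rightarrow> 'a" where
  "hneg H hadd z x = (THE y. y \<in> H \<and> z \<in> hadd x y)"

definition hypergroup :: "'a set \<Rightarrow> ('a \<Rightarrow> 'a \<Rightarrow> 'a set) \<Rightarrow> 'a \<Rightarrow> bool" where
  "hypergroup H hadd z \<longleftrightarrow> hyperaddition H hadd \<and>
     z \<in> H \<and> (\<forall>h\<in>H. hadd z h = {h}) \<and>
     (\<forall>z'\<in>H. (\<forall>h\<in>H. hadd z' h = {h}) \<longrightarrow> z' = z) \<and>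
     (\<forall>x\<in>H. \<exists>!y. y \<in> H \<and> z \<in> hadd x y) \<and>
     (\<forall>x\<in>H. \<forall>y\<in>H. \<forall>w\<in>H. x \<in> hadd y w \<longrightarrow> w \<in> hadd x (hneg H hadd z y))"

definition hyperfield :: "('a, 'b) monoid_scheme \<Rightarrow> ('a \<Rightarrow> 'a \<Rightarrow> 'a set) \<Rightarrow> 'a \<Rightarrow> bool" where
  "hyperfield M hadd z \<longleftrightarrow> hypergroup (carrier M) hadd z \<and> monoid M \<and>
     (\<forall>a\<in>carrier M. \<forall>b\<in>carrier M. \<forall>c\<in>carrier M.
        (\<lambda>d. a \<otimes>\<^bsub>M\<^esub> d) ` hadd b c = hadd (a \<otimes>\<^bsub>M\<^esub> b) (a \<otimes>\<^bsub>M\<^esub> c)) \<and>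
     (\<forall>r\<in>carrier M. r \<otimes>\<^bsub>M\<^esub> z = z) \<and>
     group (M\<lparr>carrier := carrier M - {z}\<rparr>)"

abbreviation mult_group :: "('a, 'b) monoid_scheme \<Rightarrow> 'a \<Rightarrow> ('a, 'b) monoid_scheme" where
  "mult_group M z \<equiv> M\<lparr>carrier := carrier M - {z}\<rparr>"

definition massouros ::
  "('a, 'b) monoid_scheme \<Rightarrow> ('a \<Rightarrow> 'a \<Rightarrow> 'a set) \<Rightarrow> 'a \<Rightarrow> ('c, 'd) monoid_scheme \<Rightarrow> ('a \<Rightarrow> 'c) \<Rightarrow> bool" where
  "massouros M hadd z H \<phi> \<longleftrightarrow>
     (let G = carrier M - {z} in
       comm_group (mult_group M z) \<and> group H \<and> \<phi> \<in> hom (mult_group M z) H \<and>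
       (\<exists>a b c. a \<in> \<phi> ` G \<and> b \<in> \<phi> ` G \<and> c \<in> \<phi> ` G \<and> a \<noteq> b \<and> a \<noteq> c \<and> b \<noteq> c) \<and>
       hyperfield M hadd z \<and>
       (\<forall>x\<in>carrier M. x \<otimes>\<^bsub>M\<^esub> z = z \<and> z \<otimes>\<^bsub>M\<^esub> x = z) \<and>
       (\<forall>x\<in>G. \<phi> (hneg (carrier M) hadd z x) = \<phi> x) \<and>
       (\<forall>x\<in>G. \<forall>y\<in>G. \<phi> x = \<phi> y \<longrightarrow> G - {w\<in>G. \<phi> w = \<phi> x} \<subseteq> hadd x y) \<and>
       (\<forall>x\<in>G. \<forall>y\<in>G. \<phi> x \<noteq> \<phi> y \<longrightarrow> {w\<in>G. \<phi> w = \<phi> x \<or> \<phi> w = \<phi> y} \<subseteq> hadd x y))"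

end

theory Submission
  imports Defs
begin

lemma key:
  assumes ms: "massouros M hadd z H \<phi>"
    and x: "x \<in> carrier M - {z}" and y: "y \<in> carrier M - {z}" and w: "w \<in> carrier M - {z}"
    and xy: "\<phi> x = \<phi> y" and yw: "\<phi> y \<noteq> \<phi> w"
  shows "set_hadd hadd (hadd x y) {w} = carrier M"
proof -
  let ?G = "carrier M - {z}"
  have three: "\<exists>a b c. a \<in> \<phi> ` ?G \<and> b \<in> \<phi> ` ?G \<and> c \<in> \<phi> ` ?G \<and> a \<noteq> b \<and> a \<noteq> c \<and> b \<noteq> c"
    and hf: "hyperfield M hadd z"
    and negphi: "\<forall>x\<in>?G. \<phi> (hneg (carrier M) hadd z x) = \<phi> x"
    and m2: "\<forall>x\<in>?G. \<forall>y\<in>?G. \<phi> x = \<phi> y \<longrightarrow> ?G - {w\<in>?G. \<phi> w = \<phi> x} \<subseteq> hadd x y"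
    and m3: "\<forall>x\<in>?G. \<forall>y\<in>?G. \<phi> x \<noteq> \<phi> y \<longrightarrow> {w\<in>?G. \<phi> w = \<phi> x \<or> \<phi> w = \<phi> y} \<subseteq> hadd x y"
    using ms unfolding massouros_def Let_def by auto
  have hg: "hypergroup (carrier M) hadd z" using hf unfolding hyperfield_def by auto
  hence ha: "hyperaddition (carrier M) hadd" and zM: "z \<in> carrier M"
    and zl: "\<forall>h\<in>carrier M. hadd z h = {h}"
    and ex1: "\<forall>x\<in>carrier M. \<exists>!y. y \<in> carrier M \<and> z \<in> hadd x y"
    unfolding hypergroup_def by auto
  have closed: "\<forall>x\<in>carrier M. \<forall>y\<in>carrier M. hadd x y \<subseteq> carrier M"
    and comm: "\<forall>x\<in>carrier M. \<forall>y\<in>carrier M. hadd x y = hadd y x"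
    using ha unfolding hyperaddition_def by auto
  define n where "n = hneg (carrier M) hadd z w"
  have n1: "n \<in> carrier M \<and> z \<in> hadd w n"
    unfolding n_def hneg_def using ex1 w by (metis (no_types, lifting) DiffD1 theI')
  have nz: "n \<noteq> z"
  proof
    assume "n = z"
    with n1 have "z \<in> hadd z w" using comm w zM by auto
    with zl w show False by auto
  qed
  have nG: "n \<in> ?G" using n1 nz by auto
  have phin: "\<phi> n = \<phi> w" using negphi w n_def by auto
  have sub: "?G - {v\<in>?G. \<phi> v = \<phi> x} \<subseteq> hadd x y" using m2 x y xy by auto
  have memS: "t \<in> set_hadd hadd (hadd x y) {w}" if "u \<in> hadd x y" "t \<in> hadd u w" for u t
    using that unfolding set_hadd_def by auto
  show ?thesis
  proof
    show "set_hadd hadd (hadd x y) {w} \<subseteq> carrier M"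
      unfolding set_hadd_def using closed x y w by blast
  next
    show "carrier M \<subseteq> set_hadd hadd (hadd x y) {w}"
    proof
      fix t assume t: "t \<in> carrier M"
      show "t \<in> set_hadd hadd (hadd x y) {w}"
      proof (cases "t = z")
        case True
        have "n \<in> hadd x y" using sub nG phin xy yw by auto
        moreover have "z \<in> hadd n w" using n1 comm w by auto
        ultimately show ?thesis using True memS by auto
      next
        case False
        hence tG: "t \<in> ?G" using t by auto
        have wxy: "w \<in> hadd x y" using sub w xy yw by auto
        show ?thesis
        proof (cases "\<phi> t = \<phi> w")
          case False
          have "?G - {v\<in>?G. \<phi> v = \<phi> w} \<subseteq> hadd w w" using m2 w by auto
          hence "t \<in> hadd w w" using tG False by auto
          then show ?thesis using wxy memS by auto
        next
          case True
          obtain u where uG: "u \<in> ?G" and u1: "\<phi> u \<noteq> \<phi> x" and u2: "\<phi> u \<noteq> \<phi> w"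
            using three by (smt (verit) image_iff)
          have "u \<in> hadd x y" using sub uG u1 by auto
          moreover have "t \<in> hadd u w" using m3 uG w u2 tG True by auto
          ultimately show ?thesis using memS by auto
        qed
      qed
    qed
  qed
qed


theorem mainTheorem2:
  fixes M :: "('a, 'b) monoid_scheme" and hadd :: "'a \<Rightarrow> 'a \<Rightarrow> 'a set" and z :: 'a
    and H :: "('c, 'd) monoid_scheme" and \<phi> :: "'a \<Rightarrow> 'c"
  assumes "comm_group (mult_group M z)"
    and "group H"
    and "\<phi> \<in> hom (mult_group M z) H"
    and "\<exists>x\<in>carrier M - {z}. \<phi> x \<noteq> \<one>\<^bsub>H\<^esub>"
    and "massouros M hadd z H \<phi>"
  shows "\<exists>(H' :: 'a set monoid) f. group H' \<and> f \<in> hom (mult_group M z) H' \<and>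
           (\<exists>x\<in>carrier M - {z}. f x \<noteq> \<one>\<^bsub>H'\<^esub>) \<and>
           (\<forall>x\<in>carrier M - {z}. \<forall>y\<in>carrier M - {z}. \<forall>w\<in>carrier M - {z}.
              f x = f y \<and> f y \<noteq> f w \<longrightarrow> set_hadd hadd (hadd x y) {w} = carrier M)"
proof -
  let ?G = "mult_group M z"
  let ?K = "kernel ?G H \<phi>"
  interpret gh: group_hom ?G H \<phi>
    using assms(1,2,3) unfolding group_hom_def group_hom_axioms_def comm_group_def by auto
  interpret nK: normal ?K ?G using gh.normal_kernel .
  have subK: "subgroup ?K ?G" using gh.subgroup_kernel .
  have eq1: "\<phi> x = \<phi> y" if x: "x \<in> carrier M - {z}" and y: "y \<in> carrier M - {z}"
     and e: "?K #>\<^bsub>?G\<^esub> x = ?K #>\<^bsub>?G\<^esub> y" for x y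
  proof -
    have "x \<in> ?K #>\<^bsub>?G\<^esub> y" using gh.G.rcos_self[OF _ subK, of x] x e by simp
    then obtain k where k: "k \<in> ?K" "x = k \<otimes>\<^bsub>?G\<^esub> y" unfolding r_coset_def by auto
    have "\<phi> x = \<phi> k \<otimes>\<^bsub>H\<^esub> \<phi> y" using k y gh.hom_mult[of k y] by (simp add: kernel_def)
    also have "\<dots> = \<phi> y" using k y by (simp add: kernel_def)
    finally show ?thesis .
  qed
  have eq2: "?K #>\<^bsub>?G\<^esub> x = ?K #>\<^bsub>?G\<^esub> y" if x: "x \<in> carrier M - {z}" and y: "y \<in> carrier M - {z}"
     and e: "\<phi> x = \<phi> y" for x y
    using gh.FactGroup_subset[of x y] gh.FactGroup_subset[of y x] x y e by auto
  show ?thesis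
  proof (intro exI conjI)
    show "group (?G Mod ?K)" using nK.factorgroup_is_group .
    show "(\<lambda>a. ?K #>\<^bsub>?G\<^esub> a) \<in> hom ?G (?G Mod ?K)" using nK.r_coset_hom_Mod .
    obtain x where x: "x \<in> carrier M - {z}" "\<phi> x \<noteq> \<one>\<^bsub>H\<^esub>" using assms(4) by auto
    have "?K #>\<^bsub>?G\<^esub> x \<noteq> ?K"
    proof
      assume "?K #>\<^bsub>?G\<^esub> x = ?K"
      moreover have "x \<in> ?K #>\<^bsub>?G\<^esub> x" using gh.G.rcos_self[OF _ subK] x by simp
      ultimately have "x \<in> ?K" by simp
      with x show False by (simp add: kernel_def)
    qed
    then show "\<exists>x\<in>carrier M - {z}. ?K #>\<^bsub>?G\<^esub> x \<noteq> \<one>\<^bsub>?G Mod ?K\<^esub>" using x by auto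
    show "\<forall>x\<in>carrier M - {z}. \<forall>y\<in>carrier M - {z}. \<forall>w\<in>carrier M - {z}.
       ?K #>\<^bsub>?G\<^esub> x = ?K #>\<^bsub>?G\<^esub> y \<and> ?K #>\<^bsub>?G\<^esub> y \<noteq> ?K #>\<^bsub>?G\<^esub> w \<longrightarrow>
       set_hadd hadd (hadd x y) {w} = carrier M"
    proof (intro ballI impI)
      fix x y w assume x: "x \<in> carrier M - {z}" and y: "y \<in> carrier M - {z}" and w: "w \<in> carrier M - {z}"
        and h: "?K #>\<^bsub>?G\<^esub> x = ?K #>\<^bsub>?G\<^esub> y \<and> ?K #>\<^bsub>?G\<^esub> y \<noteq> ?K #>\<^bsub>?G\<^esub> w"
      have "\<phi> x = \<phi> y" using eq1 x y h by blast
      moreover have "\<phi> y \<noteq> \<phi> w" using eq2 y w h by blast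
      ultimately show "set_hadd hadd (hadd x y) {w} = carrier M" using key[OF assms(5) x y w] by blast
    qed
  qed
qed

end
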